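(* Let $x_1,\dots,x_n$ be independent Bernoulli random variables, $p_i=\mathbb{E}x_i$ and $\bar p=\frac1n\sum_{i=1}^np_i$. For any $r>0$, $\varepsilon>0$, $\delta\in(0,1)$ and $q\in[0,1]$ with $|q-\bar p|\le r$, with probability at least $1-\delta$, $$\frac1n\sum_{i=1}^nx_i-\bar p<\varepsilon r+\sqrt{\frac{2q(1-q)\log(1/\delta)}{n}}+\Big(\frac23+\frac1{2\varepsilon}\Big)\frac{\log(1/\delta)}{n}.$$ The same upper bound also holds for $\bar p-\frac1n\sum_{i=1}^nx_i$ with probability at least $1-\delta$. *)

theory Defs
  imports "HOL-Probability.Probability"
begin

end

theory Submission imports Defs begin

lemma exp_bern_bound:
  fixes l y :: real
  assumes l0: "0 \<le> l" and l3: "l < 3" and y: "\<bar>y\<bar> \<le> 1"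
  shows "exp (l * y) \<le> 1 + l * y + y\<^sup>2 * (l\<^sup>2 / (2 * (1 - l / 3)))"
proof -
  define x where "x = l * y"
  have sumsx: "(\<lambda>n. y\<^sup>2 * l\<^sup>2 / 2 * (l/3) ^ n) sums (y\<^sup>2 * l\<^sup>2 / 2 * (1 / (1 - l/3)))"
    by (intro sums_mult geometric_sums) (use l0 l3 in simp)
  have "suminf (\<lambda>n. inverse(fact (n+2)) * (x ^ (n + 2))) \<le> suminf (\<lambda>n. y\<^sup>2 * l\<^sup>2 / 2 * (l/3) ^ n)"
  proof (intro suminf_le allI)
    show "inverse (fact (n + 2)) * x ^ (n + 2) \<le> y\<^sup>2 * l\<^sup>2 / 2 * (l/3) ^ n" for n :: nat
    proof -
      have "(2::nat) * 3 ^ n \<le> fact (n + 2)"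
      proof (induct n)
        case (Suc n)
        have "fact (Suc n + 2) = (n + 3) * (fact (n + 2) :: nat)"
          by (simp add: algebra_simps)
        moreover have "(2::nat) * 3 ^ Suc n = 3 * (2 * 3 ^ n)" by simp
        moreover have "3 * (2 * 3 ^ n) \<le> (n + 3) * (fact (n + 2) :: nat)"
          using Suc by (intro mult_mono) auto
        ultimately show ?case by simp
      qed simp
      then have "real ((2::nat) * 3 ^ n) \<le> real_of_nat (fact (n + 2))"
        by (simp only: of_nat_le_iff)
      then have f: "((2::real) * 3 ^ n) \<le> fact (n + 2)"
        unfolding of_nat_fact by simp
      have "x ^ (n + 2) \<le> \<bar>x\<bar> ^ (n + 2)"
        by (metis power_abs abs_ge_self)
      also have "\<bar>x\<bar> ^ (n + 2) = l ^ n * \<bar>y\<bar> ^ n * (l\<^sup>2 * y\<^sup>2)"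
        using l0 by (simp add: x_def abs_mult power_add power_mult_distrib power2_eq_square)
      also have "\<dots> \<le> l ^ n * 1 * (l\<^sup>2 * y\<^sup>2)"
        using l0 y by (intro mult_right_mono mult_left_mono) (auto simp: power_le_one)
      finally have xb: "x ^ (n + 2) \<le> l ^ n * (l\<^sup>2 * y\<^sup>2)" by simp
      have "inverse (fact (n + 2)) * x ^ (n + 2) \<le> inverse (fact (n + 2)) * (l ^ n * (l\<^sup>2 * y\<^sup>2))"
        by (intro mult_left_mono xb) simp
      also have "\<dots> \<le> inverse ((2::real) * 3 ^ n) * (l ^ n * (l\<^sup>2 * y\<^sup>2))"
        using f l0 by (intro mult_right_mono le_imp_inverse_le) auto
      also have "\<dots> = y\<^sup>2 * l\<^sup>2 / 2 * (l/3) ^ n"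
        by (simp add: power_divide field_simps)
      finally show ?thesis .
    qed
    show "summable (\<lambda>n. inverse (fact (n + 2)) * x ^ (n + 2))"
      by (rule summable_exp [THEN summable_ignore_initial_segment])
    show "summable (\<lambda>n. y\<^sup>2 * l\<^sup>2 / 2 * (l/3) ^ n)"
      by (rule sums_summable [OF sumsx])
  qed
  also have "\<dots> = y\<^sup>2 * (l\<^sup>2 / (2 * (1 - l / 3)))"
    using sums_unique[OF sumsx] by simp
  finally show ?thesis
    unfolding exp_first_two_terms[of "l * y"] x_def by simp
qed


context prob_space
begin

lemma bern_expectation_bounds:
  fixes Z :: "'a \<Rightarrow> real"
  assumes [measurable]: "random_variable borel Z" and Z01: "AE \<omega> in M. Z \<omega> \<in> {0, 1}"
  shows "0 \<le> expectation Z" "expectation Z \<le> 1" "integrable M Z"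
proof -
  show int: "integrable M Z"
  proof (rule integrable_const_bound)
    show "AE x in M. norm (Z x) \<le> 1" by (auto intro!: eventually_mono[OF Z01])
  qed simp
  show "0 \<le> expectation Z"
    by (rule integral_nonneg_AE) (auto intro!: eventually_mono[OF Z01])
  have "expectation Z \<le> expectation (\<lambda>_. 1)"
    by (rule integral_mono_AE[OF int]) (auto intro!: eventually_mono[OF Z01])
  then show "expectation Z \<le> 1" by (simp add: prob_space)
qed

lemma bern_mgf:
  fixes s l :: real and Z :: "'a \<Rightarrow> real"
  assumes [measurable]: "random_variable borel Z" and Z01: "AE \<omega> in M. Z \<omega> \<in> {0, 1}"
    and s: "s\<^sup>2 = 1" and l0: "0 \<le> l" and l3: "l < 3"
  shows "(\<integral>\<^sup>+\<omega>. ennreal (exp (l * (s * (Z \<omega> - expectation Z)))) \<partial>M)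
          \<le> ennreal (exp (expectation Z * (1 - expectation Z) * (l\<^sup>2 / (2 * (1 - l / 3)))))"
proof -
  define p where "p = expectation Z"
  define g where "g = (\<lambda>x. exp (l * (s * (x - p))))"
  define \<psi> where "\<psi> = l\<^sup>2 / (2 * (1 - l / 3))"
  note b = bern_expectation_bounds[OF assms(1,2)]
  have p0: "0 \<le> p" and p1: "p \<le> 1" using b by (auto simp: p_def)
  have "(\<integral>\<^sup>+\<omega>. ennreal (g (Z \<omega>)) \<partial>M) = (\<integral>\<^sup>+\<omega>. ennreal (g 0 + (g 1 - g 0) * Z \<omega>) \<partial>M)"
    by (intro nn_integral_cong_AE eventually_mono[OF Z01]) auto
  also have "\<dots> = ennreal (expectation (\<lambda>\<omega>. g 0 + (g 1 - g 0) * Z \<omega>))"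
    by (intro nn_integral_eq_integral eventually_mono[OF Z01])
       (auto intro!: Bochner_Integration.integrable_add b simp: g_def)
  also have "expectation (\<lambda>\<omega>. g 0 + (g 1 - g 0) * Z \<omega>) = g 0 + (g 1 - g 0) * p"
    using b by (simp add: prob_space p_def)
  also have "ennreal (g 0 + (g 1 - g 0) * p) \<le> ennreal (exp (p * (1 - p) * \<psi>))"
  proof (rule ennreal_leI)
  have "g 0 + (g 1 - g 0) * p = (1 - p) * exp (l * (- s * p)) + p * exp (l * (s * (1 - p)))"
    by (simp add: g_def algebra_simps)
  also have "\<dots> \<le> (1 - p) * (1 + l * (- s * p) + (- s * p)\<^sup>2 * \<psi>) + p * (1 + l * (s * (1 - p)) + (s * (1 - p))\<^sup>2 * \<psi>)"
  proof (intro add_mono mult_left_mono)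
    have sa: "\<bar>s\<bar> = 1" using s by (auto simp: power2_eq_1_iff)
    show "exp (l * (- s * p)) \<le> 1 + l * (- s * p) + (- s * p)\<^sup>2 * \<psi>"
      unfolding \<psi>_def by (rule exp_bern_bound[OF l0 l3]) (use sa p0 p1 in \<open>auto simp: abs_mult\<close>)
    show "exp (l * (s * (1 - p))) \<le> 1 + l * (s * (1 - p)) + (s * (1 - p))\<^sup>2 * \<psi>"
      unfolding \<psi>_def by (rule exp_bern_bound[OF l0 l3]) (use sa p0 p1 in \<open>auto simp: abs_mult\<close>)
  qed (use p0 p1 in auto)
  also have "\<dots> = 1 + p * (1 - p) * \<psi>"
    using s by (simp add: power_mult_distrib algebra_simps power2_eq_square)
  also have "\<dots> \<le> exp (p * (1 - p) * \<psi>)"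
    by (rule exp_ge_add_one_self)
  finally show "g 0 + (g 1 - g 0) * p \<le> exp (p * (1 - p) * \<psi>)" .
  qed
  finally show ?thesis
    unfolding g_def p_def \<psi>_def .

qed

end

context prob_space
begin

lemma bern_tail:
  fixes s l T :: real and X :: "'i \<Rightarrow> 'a \<Rightarrow> real"
  assumes fin: "finite I" and indep: "indep_vars (\<lambda>_. borel) X I"
    and X01: "\<And>i. i \<in> I \<Longrightarrow> AE \<omega> in M. X i \<omega> \<in> {0, 1}"
    and s: "s\<^sup>2 = 1" and l0: "0 < l" and l3: "l < 3"
  shows "prob {\<omega> \<in> space M. (\<Sum>i\<in>I. s * (X i \<omega> - expectation (X i))) \<ge> T}
          \<le> exp (- l * T + l\<^sup>2 / (2 * (1 - l / 3)) * (\<Sum>i\<in>I. expectation (X i) * (1 - expectation (X i))))"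
proof -
  have rv[measurable]: "random_variable borel (X i)" if "i \<in> I" for i
    using that indep unfolding indep_vars_def by blast
  define \<psi> where "\<psi> = l\<^sup>2 / (2 * (1 - l / 3))"
  define \<mu> where "\<mu> = (\<lambda>i. expectation (X i))"
  define f where "f = (\<lambda>\<omega>. (\<Sum>i\<in>I. s * (X i \<omega> - \<mu> i)))"
  have fm[measurable]: "f \<in> borel_measurable M"
    unfolding f_def by (intro borel_measurable_sum) (auto intro!: borel_measurable_times borel_measurable_diff rv)
  have "ennreal (prob {\<omega> \<in> space M. f \<omega> \<ge> T}) = emeasure M {\<omega> \<in> space M. f \<omega> \<ge> T}"
    by (simp add: emeasure_eq_measure)
  also have "\<dots> \<le> ennreal (exp (-l*T)) * (\<integral>\<^sup>+x\<in>space M. exp (l * f x) \<partial>M)"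
    by (intro Chernoff_ineq_nn_integral_ge l0) auto
  also have "(\<integral>\<^sup>+x\<in>space M. exp (l * f x) \<partial>M) =
             (\<integral>\<^sup>+x. (\<Prod>i\<in>I. ennreal (exp (l * (s * (X i x - \<mu> i))))) \<partial>M)"
    by (intro nn_integral_cong)
       (simp_all add: f_def sum_distrib_left exp_sum fin prod_ennreal)
  also have "\<dots> = (\<Prod>i\<in>I. \<integral>\<^sup>+x. ennreal (exp (l * (s * (X i x - \<mu> i)))) \<partial>M)"
    by (intro indep_vars_nn_integral fin indep_vars_compose2[OF indep]) auto
  also have "ennreal (exp (-l * T)) * \<dots> \<le>
               ennreal (exp (-l * T)) * (\<Prod>i\<in>I. ennreal (exp (\<mu> i * (1 - \<mu> i) * \<psi>)))"
  proof (intro mult_left_mono prod_mono_ennreal)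
    fix i assume i: "i \<in> I"
    show "(\<integral>\<^sup>+x. ennreal (exp (l * (s * (X i x - \<mu> i)))) \<partial>M) \<le> ennreal (exp (\<mu> i * (1 - \<mu> i) * \<psi>))"
      unfolding \<mu>_def \<psi>_def by (rule bern_mgf[OF rv[OF i] X01[OF i] s]) (use l0 l3 in auto)
  qed auto
  also have "\<dots> = ennreal (exp (-l*T) * (\<Prod>i\<in>I. exp (\<mu> i * (1 - \<mu> i) * \<psi>)))"
    by (simp add: prod_ennreal prod_nonneg flip: ennreal_mult)
  also have "exp (-l*T) * (\<Prod>i\<in>I. exp (\<mu> i * (1 - \<mu> i) * \<psi>)) = exp (- l * T + \<psi> * (\<Sum>i\<in>I. \<mu> i * (1 - \<mu> i)))"
  proof -
    have e: "(\<Prod>i\<in>I. exp (\<mu> i * (1 - \<mu> i) * \<psi>)) = exp (\<Sum>i\<in>I. \<mu> i * (1 - \<mu> i) * \<psi>)"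
      by (simp add: exp_sum fin)
    have d: "\<psi> * (\<Sum>i\<in>I. \<mu> i * (1 - \<mu> i)) = (\<Sum>i\<in>I. \<mu> i * (1 - \<mu> i) * \<psi>)"
      by (simp add: sum_distrib_left mult_ac)
    show ?thesis by (simp only: e d exp_add[symmetric])
  qed
  finally show ?thesis
    by (subst (asm) ennreal_le_iff) (simp_all add: f_def \<mu>_def \<psi>_def)
qed

end

lemma choose_l:
  fixes L W W' T :: real
  assumes L: "L > 0" and W: "0 \<le> W" "W \<le> W'" and T: "T = sqrt (2 * W' * L) + 2 * L / 3"
  shows "\<exists>l. 0 < l \<and> l < 3 \<and> - l * T + l\<^sup>2 / (2 * (1 - l / 3)) * W \<le> - L"
proof (cases "W' = 0")
  case True
  then have "W = 0" using W by simp
  then show ?thesis using True T L by (intro exI[of _ 2]) auto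
next
  case False
  then have W'p: "W' > 0" using W by simp
  define S where "S = sqrt (2 * W' * L)"
  have WL: "0 \<le> 2 * W' * L" using mult_pos_pos[OF W'p L] by (simp add: mult.commute)
  have S0: "S \<ge> 0" unfolding S_def using WL by simp
  have S2: "S\<^sup>2 = 2 * W' * L" unfolding S_def using WL by (intro real_sqrt_pow2)
  have Tp: "T > 0" using T S0 L unfolding S_def[symmetric] by simp
  define l where "l = T / (W' + T / 3)"
  have den: "W' + T / 3 > 0" using W'p Tp by simp
  have lp: "l > 0" unfolding l_def using Tp den by simp
  have l3: "l < 3" unfolding l_def using den W'p by (simp add: divide_less_eq)
  have om: "1 - l / 3 = W' / (W' + T / 3)"
    unfolding l_def using den by (simp add: field_simps)
  have lT: "l * (W' + T / 3) = T" unfolding l_def using den by simp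
  have "l\<^sup>2 / (2 * (1 - l / 3)) * W' = l\<^sup>2 * (W' + T / 3) / 2"
    unfolding om using den W'p by (simp add: field_simps)
  also have "\<dots> = l * (l * (W' + T / 3)) / 2" by (simp add: power2_eq_square)
  finally have psi: "l\<^sup>2 / (2 * (1 - l / 3)) * W' = l * T / 2" using lT by simp
  have "l\<^sup>2 / (2 * (1 - l / 3)) * W \<le> l\<^sup>2 / (2 * (1 - l / 3)) * W'"
    using W l3 by (intro mult_left_mono) auto
  then have c1: "- l * T + l\<^sup>2 / (2 * (1 - l / 3)) * W \<le> - (l * T / 2)"
    using psi by linarith
  have c2: "l * T / 2 = T\<^sup>2 / (2 * (W' + T / 3))"
    unfolding l_def using den by (simp add: field_simps power2_eq_square)
  have c3: "T\<^sup>2 / (2 * (W' + T / 3)) \<ge> L"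
  proof -
    have TS: "T = S + 2 * L / 3" using T S_def by simp
    have "T\<^sup>2 = S\<^sup>2 + 4 * L * S / 3 + 4 * L\<^sup>2 / 9"
      unfolding TS by (simp add: power2_eq_square algebra_simps)
    moreover have "L * (2 * (W' + T / 3)) = S\<^sup>2 + 2 * L * S / 3 + 4 * L\<^sup>2 / 9"
      unfolding TS S2 by (simp add: algebra_simps power2_eq_square)
    moreover have "L * S \<ge> 0" using L S0 by simp
    ultimately have "T\<^sup>2 \<ge> L * (2 * (W' + T / 3))" by linarith
    then show ?thesis using den by (simp add: le_divide_eq mult.commute)
  qed
  have "- l * T + l\<^sup>2 / (2 * (1 - l / 3)) * W \<le> - L" using c1 c2 c3 by linarith
  then show ?thesis using lp l3 by blast
qed

lemma det_bound:
  fixes L N \<epsilon> r q m :: real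
  assumes L: "L > 0" and N: "N > 0" and e: "\<epsilon> > 0" and r: "r > 0"
    and q: "0 \<le> q" "q \<le> 1" and m: "0 \<le> m" "m \<le> 1" and qm: "\<bar>q - m\<bar> \<le> r"
  shows "sqrt (2 * (m * (1 - m)) * L / N) \<le> \<epsilon> * r + sqrt (2 * q * (1 - q) * L / N) + L / (2 * \<epsilon> * N)"
proof -
  have v: "m * (1 - m) \<le> q * (1 - q) + r"
  proof -
    have "m * (1 - m) - q * (1 - q) = (q - m) * (q + m - 1)" by (simp add: algebra_simps)
    also have "\<dots> \<le> \<bar>q - m\<bar> * \<bar>q + m - 1\<bar>" by (metis abs_ge_self abs_mult)
    also have "\<dots> \<le> r * 1" using qm q m by (intro mult_mono) auto
    finally show ?thesis by simp
  qed
  have a0: "0 \<le> 2 * q * (1 - q) * L / N" using q L N by simp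
  have b0: "0 \<le> 2 * r * L / N" using r L N by simp
  have "sqrt (2 * (m * (1 - m)) * L / N) \<le> sqrt (2 * q * (1 - q) * L / N + 2 * r * L / N)"
  proof (rule real_sqrt_le_mono)
    have "(2 * q * (1 - q) * L / N + 2 * r * L / N) - 2 * (m * (1 - m)) * L / N
          = (2 * L / N) * (q * (1 - q) + r - m * (1 - m))" using N by (simp add: field_simps)
    also have "\<dots> \<ge> 0" using v L N by (intro mult_nonneg_nonneg) auto
    finally show "2 * (m * (1 - m)) * L / N \<le> 2 * q * (1 - q) * L / N + 2 * r * L / N" by simp
  qed
  also have "\<dots> \<le> sqrt (2 * q * (1 - q) * L / N) + sqrt (2 * r * L / N)"
    using a0 b0 by (rule sqrt_add_le_add_sqrt)
  also have "sqrt (2 * r * L / N) \<le> \<epsilon> * r + L / (2 * \<epsilon> * N)"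
  proof (rule real_le_lsqrt)
    show "0 \<le> \<epsilon> * r + L / (2 * \<epsilon> * N)" using e r L N by simp
    have "(\<epsilon> * r + L / (2 * \<epsilon> * N))\<^sup>2 - 2 * r * L / N = (\<epsilon> * r - L / (2 * \<epsilon> * N))\<^sup>2"
      using e N by (simp add: power2_eq_square field_simps)
    then show "2 * r * L / N \<le> (\<epsilon> * r + L / (2 * \<epsilon> * N))\<^sup>2"
      by (smt (verit) zero_le_power2)
  qed
  finally show ?thesis by simp
qed

lemma var_sum_bound:
  fixes p :: "nat \<Rightarrow> real" and I :: "nat set"
  assumes "finite I" "I \<noteq> {}"
  shows "(\<Sum>i\<in>I. p i * (1 - p i)) \<le> real (card I) * ((1 / real (card I)) * (\<Sum>i\<in>I. p i) * (1 - (1 / real (card I)) * (\<Sum>i\<in>I. p i)))"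
proof -
  define c where "c = real (card I)"
  define m where "m = (1 / c) * (\<Sum>i\<in>I. p i)"
  have c: "c > 0" using assms by (simp add: c_def card_gt_0_iff)
  have sm: "(\<Sum>i\<in>I. p i) = c * m" using c by (simp add: m_def)
  have "0 \<le> (\<Sum>i\<in>I. (p i - m)\<^sup>2)" by (simp add: sum_nonneg)
  also have "(\<Sum>i\<in>I. (p i - m)\<^sup>2) = (\<Sum>i\<in>I. p i * p i - 2 * m * p i + m * m)"
    by (simp add: power2_eq_square algebra_simps)
  also have "\<dots> = (\<Sum>i\<in>I. p i * p i) - 2 * m * (\<Sum>i\<in>I. p i) + c * m\<^sup>2"
    by (simp add: sum.distrib sum_subtractf sum_distrib_left c_def power2_eq_square)
  finally have "(\<Sum>i\<in>I. p i * p i) \<ge> c * m * m" using sm by (simp add: power2_eq_square algebra_simps)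
  then have "(\<Sum>i\<in>I. p i * (1 - p i)) \<le> c * (m * (1 - m))"
    using sm by (simp add: algebra_simps sum_subtractf)
  then show ?thesis by (simp add: c_def m_def)
qed


theorem lemma2:
  fixes M :: "'a measure" and X :: "nat \<Rightarrow> 'a \<Rightarrow> real" and n :: nat
    and r \<epsilon> \<delta> q :: real
  assumes "prob_space M"
    and "n > 0"
    and "prob_space.indep_vars M (\<lambda>_. borel) X {1..n}"
    and "\<And>i. i \<in> {1..n} \<Longrightarrow> AE \<omega> in M. X i \<omega> \<in> {0, 1}"
    and "r > 0" and "\<epsilon> > 0" and "0 < \<delta>" and "\<delta> < 1"
    and "0 \<le> q" and "q \<le> 1"
    and "\<bar>q - (1 / real n) * (\<Sum>i=1..n. prob_space.expectation M (X i))\<bar> \<le> r"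
  shows "measure M {\<omega> \<in> space M.
            (1 / real n) * (\<Sum>i=1..n. X i \<omega>)
              - (1 / real n) * (\<Sum>i=1..n. prob_space.expectation M (X i))
            < \<epsilon> * r + sqrt (2 * q * (1 - q) * ln (1 / \<delta>) / real n)
              + (2/3 + 1 / (2 * \<epsilon>)) * ln (1 / \<delta>) / real n} \<ge> 1 - \<delta>
   \<and> measure M {\<omega> \<in> space M.
            (1 / real n) * (\<Sum>i=1..n. prob_space.expectation M (X i))
              - (1 / real n) * (\<Sum>i=1..n. X i \<omega>)
            < \<epsilon> * r + sqrt (2 * q * (1 - q) * ln (1 / \<delta>) / real n)
              + (2/3 + 1 / (2 * \<epsilon>)) * ln (1 / \<delta>) / real n} \<ge> 1 - \<delta>"
proof -
  interpret prob_space M by fact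
  note indep = assms(3) and X01 = assms(4)
  define I where "I = {1..n}"
  have fin: "finite I" and cardI: "card I = n" and Ine: "I \<noteq> {}"
    using assms(2) by (auto simp: I_def)
  have rv[measurable]: "random_variable borel (X i)" if "i \<in> I" for i
    using that indep unfolding indep_vars_def I_def by blast
  define p where "p = (\<lambda>i. expectation (X i))"
  have p01: "0 \<le> p i" "p i \<le> 1" if "i \<in> I" for i
    using bern_expectation_bounds[OF rv[OF that] X01] that by (auto simp: p_def I_def)
  define N where "N = real n"
  have N: "N > 0" using assms(2) by (simp add: N_def)
  define L where "L = ln (1 / \<delta>)"
  have L: "L > 0" using assms(7,8) by (simp add: L_def)
  define m where "m = (1 / N) * (\<Sum>i\<in>I. p i)"
  have m0: "0 \<le> m" using p01 N by (simp add: m_def sum_nonneg)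
  have "(\<Sum>i\<in>I. p i) \<le> (\<Sum>i\<in>I. 1)" using p01 by (intro sum_mono) auto
  then have m1: "m \<le> 1" using N cardI by (simp add: m_def N_def)
  define W where "W = (\<Sum>i\<in>I. p i * (1 - p i))"
  define W' where "W' = N * (m * (1 - m))"
  have W0: "0 \<le> W" using p01 by (simp add: W_def sum_nonneg)
  have WW': "W \<le> W'"
    using var_sum_bound[OF fin Ine, of p] cardI by (simp add: W_def W'_def m_def N_def)
  define T where "T = sqrt (2 * W' * L) + 2 * L / 3"
  obtain l where l0: "0 < l" and l3: "l < 3" and lb: "- l * T + l\<^sup>2 / (2 * (1 - l / 3)) * W \<le> - L"
    using choose_l[OF L W0 WW' T_def] by blast
  define B where "B = \<epsilon> * r + sqrt (2 * q * (1 - q) * ln (1 / \<delta>) / real n)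
              + (2/3 + 1 / (2 * \<epsilon>)) * ln (1 / \<delta>) / real n"
  have TB: "T / N \<le> B"
  proof -
    have "sqrt (2 * W' * L) = N * sqrt (2 * (m * (1 - m)) * L / N)"
    proof -
      have "N * sqrt (2 * (m * (1 - m)) * L / N) = sqrt (N\<^sup>2) * sqrt (2 * (m * (1 - m)) * L / N)"
        using N by simp
      also have "\<dots> = sqrt (N\<^sup>2 * (2 * (m * (1 - m)) * L / N))" by (rule real_sqrt_mult[symmetric])
      also have "N\<^sup>2 * (2 * (m * (1 - m)) * L / N) = 2 * W' * L"
        using N by (simp add: W'_def power2_eq_square field_simps)
      finally show ?thesis by simp
    qed
    then have "T / N = sqrt (2 * (m * (1 - m)) * L / N) + 2 * L / (3 * N)"
      using N by (simp add: T_def field_simps)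
    also have "\<dots> \<le> \<epsilon> * r + sqrt (2 * q * (1 - q) * L / N) + L / (2 * \<epsilon> * N) + 2 * L / (3 * N)"
      using det_bound[OF L N assms(6) assms(5) assms(9,10) m0 m1] assms(11)
      by (simp add: m_def N_def p_def I_def)
    also have "\<dots> = B"
      using N assms(6) by (simp add: B_def L_def N_def field_simps)
    finally show ?thesis .
  qed
  have gen: "1 - \<delta> \<le> measure M {\<omega> \<in> space M. s * ((1 / N) * (\<Sum>i\<in>I. X i \<omega>) - m) < B}"
    if s: "s\<^sup>2 = 1" for s :: real
  proof -
    define f where "f = (\<lambda>\<omega>. (\<Sum>i\<in>I. s * (X i \<omega> - p i)))"
    have fm[measurable]: "f \<in> borel_measurable M"
      unfolding f_def by (intro borel_measurable_sum) (auto intro!: borel_measurable_times borel_measurable_diff rv)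
    have gm[measurable]: "(\<lambda>\<omega>. s * ((1 / N) * (\<Sum>i\<in>I. X i \<omega>) - m)) \<in> borel_measurable M"
      by (intro borel_measurable_times borel_measurable_diff borel_measurable_sum) (auto intro!: rv)
    have tail: "prob {\<omega> \<in> space M. f \<omega> \<ge> T} \<le> \<delta>"
    proof -
      have "prob {\<omega> \<in> space M. f \<omega> \<ge> T} \<le> exp (- l * T + l\<^sup>2 / (2 * (1 - l / 3)) * W)"
        using bern_tail[OF fin indep[folded I_def] X01[folded I_def] s l0 l3, of T]
        by (simp add: f_def p_def W_def)
      also have "\<dots> \<le> exp (- L)" using lb by simp
      also have "exp (- L) = \<delta>" using assms(7) by (simp add: L_def exp_minus ln_div)
      finally show ?thesis .
    qed
    have fe: "f \<omega> = s * N * ((1 / N) * (\<Sum>i\<in>I. X i \<omega>) - m)" for \<omega>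
      using N by (simp add: f_def m_def sum_subtractf sum_distrib_left[symmetric] field_simps)
    have sub: "space M - {\<omega> \<in> space M. f \<omega> \<ge> T} \<subseteq> {\<omega> \<in> space M. s * ((1 / N) * (\<Sum>i\<in>I. X i \<omega>) - m) < B}"
    proof safe
      fix \<omega> assume "\<omega> \<in> space M" "\<not> T \<le> f \<omega>"
      then have "f \<omega> / N < T / N" using N by (simp add: divide_strict_right_mono)
      also have "f \<omega> / N = s * ((1 / N) * (\<Sum>i\<in>I. X i \<omega>) - m)" using N fe[of \<omega>] by simp
      finally show "s * ((1 / N) * (\<Sum>i\<in>I. X i \<omega>) - m) < B" using TB by simp
    qed
    have "1 - \<delta> \<le> 1 - prob {\<omega> \<in> space M. f \<omega> \<ge> T}" using tail by simp
    also have "\<dots> = prob (space M - {\<omega> \<in> space M. f \<omega> \<ge> T})"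
      by (rule prob_compl[symmetric]) measurable
    also have "\<dots> \<le> measure M {\<omega> \<in> space M. s * ((1 / N) * (\<Sum>i\<in>I. X i \<omega>) - m) < B}"
      by (rule finite_measure_mono[OF sub]) measurable
    finally show ?thesis .
  qed
  show ?thesis
    using gen[of 1] gen[of "-1"]
    by (simp add: B_def m_def N_def p_def I_def algebra_simps)
qed

end
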